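(* Let $U$ be a binary operator on $\mathbb{C}^2\otimes\mathbb{C}^2$ written in $2\times2$ blocks as $U=\left[\begin{array}{c|c}U_{11}&U_{12}\\ \hline U_{21}&U_{22}\end{array}\right]$ (each $U_{ij}$ a $2\times2$ matrix, $U=\sum_{a,b\in\{0,1\}}\ket a\bra b\otimes U_{a+1,b+1}$). Let $k\ge2$, $m,n\ge1$ with $m+n\le k$, and let $\rho$ be a density operator on $\otimes^k\mathbb{C}^2$. Then $$\mathrm{Tr}\!\left[\big(I^{(m-1)}\otimes P_1\otimes I^{(n-1)}\otimes P_1\otimes I^{(k-m-n)}\big)\,U_{(k;m,m+n)}\,\rho\,U_{(k;m,m+n)}^{\dagger}\right]=\mathrm{Tr}\!\left[\big(I^{(m-1)}\otimes\Lambda_U^{(n+1)}\otimes I^{(k-m-n)}\big)\rho\right],$$ where $$\Lambda_U^{(n+1)}=\left[\begin{array}{c|c}I^{(n-1)}\otimes(U_{21}^{\dagger}P_1U_{21})&I^{(n-1)}\otimes(U_{21}^{\dagger}P_1U_{22})\\ \hline I^{(n-1)}\otimes(U_{22}^{\dagger}P_1U_{21})&I^{(n-1)}\otimes(U_{22}^{\dagger}P_1U_{22})\end{array}\right].$$ (The left-hand side is the multi-target probability $\texttt{P}[U_{(k;m,m+n)},\rho]$ when the target positions of $U_{(k;m,m+n)}$ are exactly $m$ and $m+n$.)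
   Context: Qubits are vectors in $\mathbb{C}^2$ with computational basis $\ket0,\ket1$; tensor products are Kronecker products. $I^{(j)}$ denotes the identity on $\otimes^j\mathbb{C}^2$, $I^{(0)}=1$. $P_1=\ket1\bra1$. For a binary gate $U$ and $1\le m<m+n\le k$, $U_{(k;m,m+n)}$ denotes the operator on $\otimes^k\mathbb{C}^2$ that applies $U$ to the $m$-th and $(m+n)$-th qubits (the $m$-th as first factor of $U$, the $(m+n)$-th as second) and acts as the identity on the other qubits. In the paper's multi-target quantum computational logic, the probability $\texttt{P}[V,\rho]$ of a gate $V$ on input $\rho$ is $\mathrm{Tr}[(\mathcal P_1\otimes\cdots\otimes\mathcal P_k)V\rho V^\dagger]$ with $\mathcal P_i=P_1$ at target positions (those qubits affected by $V$) and $\mathcal P_i=I$ at the other positions. *)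

theory Defs
  imports Complex_Main "Jordan_Normal_Form.Matrix"
begin

text \<open>Operators on
  k qubits are 2^k x 2^k matrices; the computational basis index x encodes the bits
  of the qubits with qubit 1 as the most significant bit.\<close>

definition kron :: "complex mat \<Rightarrow> complex mat \<Rightarrow> complex mat" where
  "kron A B = mat (dim_row A * dim_row B) (dim_col A * dim_col B)
     (\<lambda>(i,j). A $$ (i div dim_row B, j div dim_col B) * B $$ (i mod dim_row B, j mod dim_col B))"

definition dag :: "complex mat \<Rightarrow> complex mat" where
  "dag A = mat (dim_col A) (dim_row A) (\<lambda>(i,j). cnj (A $$ (j,i)))"

definition tr :: "complex mat \<Rightarrow> complex" where
  "tr A = (\<Sum>i<dim_row A. A $$ (i,i))"

definition Id :: "nat \<Rightarrow> complex mat" where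
  "Id j = 1\<^sub>m (2 ^ j)"

definition P1 :: "complex mat" where
  "P1 = mat 2 2 (\<lambda>(i,j). if i = 1 \<and> j = 1 then 1 else 0)"

text \<open>Block U_{a+1,b+1} (a,b in {0,1}) of a 4x4 matrix U = sum |a><b| (x) U_{a+1,b+1}.\<close>
definition blk :: "complex mat \<Rightarrow> nat \<Rightarrow> nat \<Rightarrow> complex mat" where
  "blk U a b = mat 2 2 (\<lambda>(i,j). U $$ (2 * a + i, 2 * b + j))"

text \<open>The value of the q-th qubit (1-based) in basis index x of a k-qubit register.\<close>
definition qbit :: "nat \<Rightarrow> nat \<Rightarrow> nat \<Rightarrow> nat" where
  "qbit k q x = (x div 2 ^ (k - q)) mod 2"

definition gate2 :: "complex mat \<Rightarrow> nat \<Rightarrow> nat \<Rightarrow> nat \<Rightarrow> complex mat" where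
  "gate2 U k p q = mat (2 ^ k) (2 ^ k) (\<lambda>(y,x).
     if (\<forall>i\<in>{1..k}. i \<noteq> p \<and> i \<noteq> q \<longrightarrow> qbit k i y = qbit k i x)
     then U $$ (2 * qbit k p y + qbit k q y, 2 * qbit k p x + qbit k q x) else 0)"

definition Lambda :: "complex mat \<Rightarrow> nat \<Rightarrow> complex mat" where
  "Lambda U n = four_block_mat
     (kron (Id (n - 1)) (dag (blk U 1 0) * P1 * blk U 1 0))
     (kron (Id (n - 1)) (dag (blk U 1 0) * P1 * blk U 1 1))
     (kron (Id (n - 1)) (dag (blk U 1 1) * P1 * blk U 1 0))
     (kron (Id (n - 1)) (dag (blk U 1 1) * P1 * blk U 1 1))"

definition density :: "nat \<Rightarrow> complex mat \<Rightarrow> bool" where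
  "density k \<rho> \<longleftrightarrow> \<rho> \<in> carrier_mat (2 ^ k) (2 ^ k) \<and> dag \<rho> = \<rho> \<and>
     (\<forall>v \<in> carrier_vec (2 ^ k). 0 \<le> Re (scalar_prod (map_vec cnj v) (\<rho> *\<^sub>v v))) \<and> tr \<rho> = 1"

end

theory Submission
  imports Defs
begin

lemma tr_comm:
  assumes "A \<in> carrier_mat n r" "B \<in> carrier_mat r n"
  shows "tr (A * B) = tr (B * A)"
proof -
  have "tr (A * B) = (\<Sum>i<n. \<Sum>j<r. A $$ (i,j) * B $$ (j,i))"
    using assms unfolding tr_def by (auto simp: scalar_prod_def lessThan_atLeast0 intro!: sum.cong)
  also have "\<dots> = (\<Sum>j<r. \<Sum>i<n. B $$ (j,i) * A $$ (i,j))"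
    by (subst sum.swap) (simp add: mult.commute)
  also have "\<dots> = tr (B * A)"
    using assms unfolding tr_def by (auto simp: scalar_prod_def lessThan_atLeast0 intro!: sum.cong)
  finally show ?thesis .
qed


lemma L2: "((a::nat) div 2^p = b div 2^p) \<longleftrightarrow> (\<forall>q. bit a (p+q) = bit b (p+q))"
proof -
  have "(a div 2^p = b div 2^p) \<longleftrightarrow> drop_bit p a = drop_bit p b" by (simp add: drop_bit_eq_div)
  also have "\<dots> \<longleftrightarrow> (\<forall>q. bit a (p+q) = bit b (p+q))"
    by (simp add: bit_eq_iff bit_drop_bit_eq)
  finally show ?thesis .
qed

lemma L1: "((a::nat) div 2^p mod 2^w = b div 2^p mod 2^w) \<longleftrightarrow> (\<forall>q<w. bit a (p+q) = bit b (p+q))"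
proof -
  have "(a div 2^p mod 2^w = b div 2^p mod 2^w) \<longleftrightarrow> take_bit w (drop_bit p a) = take_bit w (drop_bit p b)" by (simp add: drop_bit_eq_div take_bit_eq_mod)
  also have "\<dots> \<longleftrightarrow> (\<forall>q<w. bit a (p+q) = bit b (p+q))"
    by (auto simp add: bit_eq_iff bit_drop_bit_eq bit_take_bit_iff)
  finally show ?thesis .
qed

lemma L3: "((a::nat) mod 2^w = b mod 2^w) \<longleftrightarrow> (\<forall>q<w. bit a q = bit b q)"
  using L1[of a 0 w b] by simp

lemma L4: "(a::nat) div 2^p mod 2 = (if bit a p then 1 else 0)"
  by (auto simp: bit_iff_odd odd_iff_mod_2_eq_one)

lemma cover:
  fixes E N q :: nat
  assumes "\<forall>q<E. P q" "P E" "\<forall>q<N. P (E+1+q)" "P (E+1+N)" "\<forall>q. P (E+1+N+1+q)"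
  shows "P q"
proof (cases "q < E")
  case True then show ?thesis using assms by auto
next
  case F1: False
  show ?thesis
  proof (cases "q = E")
    case True then show ?thesis using assms by auto
  next
    case F2: False
    show ?thesis
    proof (cases "q < E+1+N")
      case True then show ?thesis using F1 F2 assms(3)[rule_format, of "q-E-1"] by simp
    next
      case F3: False
      show ?thesis
      proof (cases "q = E+1+N")
        case True then show ?thesis using assms by auto
      next
        case False
        then have "E+1+N+1+(q-E-1-N-1) = q" using F3 by simp
        then show ?thesis using assms(5) by metis
      qed
    qed
  qed
qed

lemma decomp_B: "(\<forall>q. q \<noteq> E \<and> q \<noteq> E+1+N \<longrightarrow> (bit (i::nat) q \<longleftrightarrow> bit j q)) \<longleftrightarrow>
  (i div 2^(E+1+N+1) = j div 2^(E+1+N+1) \<and> i div 2^(E+1) mod 2^N = j div 2^(E+1) mod 2^N \<and> i mod 2^E = j mod 2^E)"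
  (is "?l \<longleftrightarrow> ?r")
proof
  assume ?l then show ?r unfolding L1 unfolding L2 L3 by auto
next
  assume ?r
  hence h: "\<forall>q. bit i (E+1+N+1+q) = bit j (E+1+N+1+q)" "\<forall>q<N. bit i (E+1+q) = bit j (E+1+q)"
      "\<forall>q<E. bit i q = bit j q" unfolding L1 unfolding L2 L3 by auto
  show ?l
  proof (intro allI impI)
    fix q assume "q \<noteq> E \<and> q \<noteq> E+1+N"
    have "(\<lambda>q. q \<noteq> E \<and> q \<noteq> E+1+N \<longrightarrow> bit i q = bit j q) q"
      by (rule cover[where E=E and N=N]) (use h in auto)
    then show "bit i q = bit j q" using \<open>q \<noteq> E \<and> q \<noteq> E+1+N\<close> by simp
  qed
qed

lemma decomp_eq: "((i::nat) = j) \<longleftrightarrow> (i div 2^(E+1+N+1) = j div 2^(E+1+N+1) \<and> (bit i (E+1+N) \<longleftrightarrow> bit j (E+1+N)) \<and>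
   i div 2^(E+1) mod 2^N = j div 2^(E+1) mod 2^N \<and> (bit i E \<longleftrightarrow> bit j E) \<and> i mod 2^E = j mod 2^E)"
proof -
  have "(i = j) \<longleftrightarrow> (\<forall>q. bit i q \<longleftrightarrow> bit j q)" by (simp add: bit_eq_iff)
  also have "\<dots> \<longleftrightarrow> (\<forall>q. q \<noteq> E \<and> q \<noteq> E+1+N \<longrightarrow> (bit i q \<longleftrightarrow> bit j q)) \<and> (bit i (E+1+N) \<longleftrightarrow> bit j (E+1+N)) \<and> (bit i E \<longleftrightarrow> bit j E)"
    by metis
  finally show ?thesis unfolding decomp_B by blast
qed

lemma kron_index2:
  assumes "A \<in> carrier_mat ra ra" "B \<in> carrier_mat rb rb" "i < ra * rb" "j < ra * rb"
  shows "kron A B $$ (i,j) = A $$ (i div rb, j div rb) * B $$ (i mod rb, j mod rb)"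
  using assms unfolding kron_def by auto

lemma kron_carrier2:
  assumes "A \<in> carrier_mat ra ra" "B \<in> carrier_mat rb rb"
  shows "kron A B \<in> carrier_mat (ra * rb) (ra * rb)"
  using assms unfolding kron_def by auto

lemma Id_carrier: "Id j \<in> carrier_mat (2^j) (2^j)" unfolding Id_def by simp
lemma P1_carrier: "P1 \<in> carrier_mat 2 2" unfolding P1_def by simp
lemma Id_index: "a < 2^j \<Longrightarrow> b < 2^j \<Longrightarrow> Id j $$ (a,b) = (if a = b then 1 else 0)"
  unfolding Id_def by simp
lemma P1_index: "a < 2 \<Longrightarrow> b < 2 \<Longrightarrow> P1 $$ (a,b) = (if a = 1 \<and> b = 1 then 1 else 0)"
  unfolding P1_def by simp

lemma divbound: "(i::nat) < a * b \<Longrightarrow> 0 < b \<Longrightarrow> i div b < a"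
  by (simp add: div_less_iff_less_mult)

lemma div_chain1: "(i::nat) div 2^E div 2 = i div 2^(E+1)"
  by (metis div_mult2_eq power_Suc2 Suc_eq_plus1)
lemma div_chain2: "(i::nat) div 2^E div 2^N = i div 2^(E+N)"
  by (simp add: div_mult2_eq power_add)

lemma Pk_entry:
  fixes M N E i j :: nat
  assumes "i < 2^M*2*2^N*2*2^E" "j < 2^M*2*2^N*2*2^E"
  shows "kron (kron (kron (kron (Id M) P1) (Id N)) P1) (Id E) $$ (i,j) =
    (if i = j \<and> bit i E \<and> bit i (E+1+N) then 1 else 0)"
proof -
  have c2: "kron (Id M) P1 \<in> carrier_mat (2^M*2) (2^M*2)" by (intro kron_carrier2 Id_carrier P1_carrier)
  have c3: "kron (kron (Id M) P1) (Id N) \<in> carrier_mat (2^M*2*2^N) (2^M*2*2^N)" by (intro kron_carrier2 c2 Id_carrier)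
  have c4: "kron (kron (kron (Id M) P1) (Id N)) P1 \<in> carrier_mat (2^M*2*2^N*2) (2^M*2*2^N*2)" by (intro kron_carrier2 c3 P1_carrier)
  define i1 where "i1 = i div 2^E"
  define j1 where "j1 = j div 2^E"
  define i2 where "i2 = i1 div 2"
  define j2 where "j2 = j1 div 2"
  define i3 where "i3 = i2 div 2^N"
  define j3 where "j3 = j2 div 2^N"
  have b1: "i1 < 2^M*2*2^N*2" "j1 < 2^M*2*2^N*2" using assms unfolding i1_def j1_def by (auto intro!: divbound)
  have b2: "i2 < 2^M*2*2^N" "j2 < 2^M*2*2^N" using b1 unfolding i2_def j2_def by (auto intro!: divbound)
  have b3: "i3 < 2^M*2" "j3 < 2^M*2" using b2 unfolding i3_def j3_def by (auto intro!: divbound)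
  have b4: "i3 div 2 < 2^M" "j3 div 2 < 2^M" using b3 by (auto intro!: divbound)
  have "kron (kron (kron (kron (Id M) P1) (Id N)) P1) (Id E) $$ (i,j) =
     Id M $$ (i3 div 2, j3 div 2) * P1 $$ (i3 mod 2, j3 mod 2) * Id N $$ (i2 mod 2^N, j2 mod 2^N)
     * P1 $$ (i1 mod 2, j1 mod 2) * Id E $$ (i mod 2^E, j mod 2^E)"
    apply (subst kron_index2[OF c4 Id_carrier assms])
    apply (subst kron_index2[OF c3 P1_carrier b1[folded i1_def j1_def, unfolded i1_def j1_def]])
    apply (fold i1_def j1_def)
    apply (subst kron_index2[OF c2 Id_carrier b2[unfolded i2_def j2_def]])
    apply (fold i2_def j2_def)
    apply (subst kron_index2[OF Id_carrier P1_carrier b3[unfolded i3_def j3_def]])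
    apply (fold i3_def j3_def)
    by simp
  also have "\<dots> = (if i3 div 2 = j3 div 2 \<and> i3 mod 2 = 1 \<and> j3 mod 2 = 1 \<and> i2 mod 2^N = j2 mod 2^N \<and>
     i1 mod 2 = 1 \<and> j1 mod 2 = 1 \<and> i mod 2^E = j mod 2^E then 1 else 0)"
    using b4 by (simp add: Id_index P1_index)
  also have "\<dots> = (if i = j \<and> bit i E \<and> bit i (E+1+N) then 1 else 0)"
  proof -
    have e: "i3 div 2 = i div 2^(E+1+N+1)" "j3 div 2 = j div 2^(E+1+N+1)"
      "i3 mod 2 = (if bit i (E+1+N) then 1 else 0)" "j3 mod 2 = (if bit j (E+1+N) then 1 else 0)"
      "i2 mod 2^N = i div 2^(E+1) mod 2^N" "j2 mod 2^N = j div 2^(E+1) mod 2^N"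
      "i1 mod 2 = (if bit i E then 1 else 0)" "j1 mod 2 = (if bit j E then 1 else 0)"
      unfolding i3_def j3_def i2_def j2_def i1_def j1_def div_chain1 div_chain2 L4
      by (simp_all add: div_chain1 add.commute add.left_commute)
    show ?thesis unfolding e decomp_eq[of i j E N] by auto
  qed
  finally show ?thesis .
qed


lemma V1: "(a::nat) div 2^E mod 2^(N+2) div 2^(N+1) = (if bit a (E+1+N) then 1 else 0)"
proof -
  have "a div 2^E mod 2^(N+2) div 2^(N+1) = drop_bit (N+1) (take_bit (N+2) (drop_bit E a))"
    by (simp only: drop_bit_eq_div take_bit_eq_mod)
  also have "\<dots> = (if bit a (E+1+N) then 1 else 0)"
    by (rule bit_eqI) (auto simp add: bit_simps add_ac)
  finally show ?thesis .
qed
lemma V2: "(a::nat) div 2^E mod 2^(N+2) mod 2 = (if bit a E then 1 else 0)"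
proof -
  have "(2::nat) dvd 2^(N+2)" by simp
  then have "a div 2^E mod 2^(N+2) mod 2 = a div 2^E mod 2" by (rule mod_mod_cancel)
  then show ?thesis by (auto simp: bit_iff_odd odd_iff_mod_2_eq_one)
qed
lemma V3: "(a::nat) div 2^E mod 2^(N+2) mod 2^(N+1) div 2 = a div 2^(E+1) mod 2^N"
proof -
  have "a div 2^E mod 2^(N+2) mod 2^(N+1) div 2 = drop_bit 1 (take_bit (N+1) (take_bit (N+2) (drop_bit E a)))"
    by (simp only: drop_bit_eq_div take_bit_eq_mod power_one_right)
  also have "\<dots> = take_bit N (drop_bit (E+1) a)"
    by (rule bit_eqI) (auto simp add: bit_simps add_ac)
  also have "\<dots> = a div 2^(E+1) mod 2^N"
    by (simp only: drop_bit_eq_div take_bit_eq_mod)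
  finally show ?thesis .
qed
lemma V4: "(a::nat) div 2^E div 2^(N+2) = a div 2^(E+1+N+1)"
  by (simp only: drop_bit_eq_div[symmetric] drop_bit_drop_bit) (simp add: add_ac)
lemma M2: assumes "i < 2" "j < 2" shows "(dag (blk U 1 \<alpha>) * P1 * blk U 1 \<beta>) $$ (i,j) = cnj (U $$ (3, 2*\<alpha>+i)) * U $$ (3, 2*\<beta>+j)"
  using assms by (simp add: dag_def blk_def P1_def scalar_prod_def numeral_2_eq_2 sum.atLeast0_lessThan_Suc eval_nat_numeral)

lemma Mab_carrier: "dag (blk U 1 a) * P1 * blk U 1 b \<in> carrier_mat 2 2"
  unfolding dag_def blk_def P1_def carrier_mat_def by simp
lemma Bk: assumes "p < 2^N*2" "q < 2^N*2"
  shows "kron (Id N) (dag (blk U 1 a) * P1 * blk U 1 b) $$ (p,q) =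
    (if p div 2 = q div 2 then cnj (U$$(3, 2*a + p mod 2)) * U$$(3, 2*b + q mod 2) else 0)"
  apply (subst kron_index2[OF Id_carrier Mab_carrier assms])
  apply (subst M2)
  apply simp
  apply simp
  apply (subst Id_index)
  using assms apply (simp add: divbound)
  using assms apply (simp add: divbound)
  by simp
lemma Mab_carrier': "dag (blk U 1 a) * P1 * blk U 1 b \<in> carrier_mat 2 2" by (rule Mab_carrier)
lemma Lambda_carrier: "Lambda U (Suc N) \<in> carrier_mat (2^(N+2)) (2^(N+2))"
proof -
  have c: "kron (Id N) (dag (blk U 1 a) * P1 * blk U 1 b) \<in> carrier_mat (2^N*2) (2^N*2)" for a b
    by (rule kron_carrier2[OF Id_carrier Mab_carrier])
  have "Lambda U (Suc N) \<in> carrier_mat (2^N*2 + 2^N*2) (2^N*2 + 2^N*2)"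
    unfolding Lambda_def diff_Suc_1 by (rule four_block_carrier_mat[OF c c])
  moreover have "(2::nat)^N*2 + 2^N*2 = 2^(N+2)" by simp
  ultimately show ?thesis by simp
qed

lemma Lambda_entry:
  assumes "p < 2^(N+2)" "q < 2^(N+2)"
  shows "Lambda U (Suc N) $$ (p,q) = (if p mod 2^(N+1) div 2 = q mod 2^(N+1) div 2 then
     cnj (U$$(3, 2*(p div 2^(N+1)) + p mod 2)) * U$$(3, 2*(q div 2^(N+1)) + q mod 2) else 0)"
proof -
  define S :: nat where "S = 2^N*2"
  have S: "2^(N+1) = S" "2^(N+2) = S + S" unfolding S_def by simp_all
  have Sev: "even S" unfolding S_def by simp
  have cb: "kron (Id N) (dag (blk U 1 a) * P1 * blk U 1 b) \<in> carrier_mat S S" for a b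
    unfolding S_def by (rule kron_carrier2[OF Id_carrier Mab_carrier])
  have pq: "p < S + S" "q < S + S" using assms S by auto
  have lo: "x < S \<Longrightarrow> x div S = 0 \<and> x mod S = x" for x by simp
  have hi: "S \<le> x \<Longrightarrow> x < S + S \<Longrightarrow> x div S = 1 \<and> x mod S = x - S \<and> (x - S) mod 2 = x mod 2" for x
  proof -
    assume a: "S \<le> x" "x < S + S"
    have "x div S = 1" using a by (simp add: div_nat_eqI)
    moreover have "x mod S = x - S" using a by (simp add: le_mod_geq)
    moreover have "(x - S) mod 2 = x mod 2"
    proof -
      obtain t where "S = 2*t" using Sev by blast
      moreover have "x = (x - S) + S" using a by simp
      ultimately show ?thesis by (metis mod_mult_self2 mult.commute)
    qed
    ultimately show ?thesis by simp
  qed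
  have Bk': "p' < S \<Longrightarrow> q' < S \<Longrightarrow> kron (Id N) (dag (blk U 1 a) * P1 * blk U 1 b) $$ (p',q') =
    (if p' div 2 = q' div 2 then cnj (U$$(3, 2*a + p' mod 2)) * U$$(3, 2*b + q' mod 2) else 0)" for p' q' a b
    unfolding S_def by (rule Bk)
  have fb: "Lambda U (Suc N) $$ (p,q) = (if p < S then if q < S then
      kron (Id N) (dag (blk U 1 0) * P1 * blk U 1 0) $$ (p,q) else kron (Id N) (dag (blk U 1 0) * P1 * blk U 1 1) $$ (p,q-S)
    else if q < S then kron (Id N) (dag (blk U 1 1) * P1 * blk U 1 0) $$ (p-S,q)
     else kron (Id N) (dag (blk U 1 1) * P1 * blk U 1 1) $$ (p-S,q-S))"
    unfolding Lambda_def diff_Suc_1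
    apply (rule trans[OF index_mat_four_block(1)])
    using pq cb[THEN carrier_matD(1)] cb[THEN carrier_matD(2)] by auto
  have "Lambda U (Suc N) $$ (p,q) = (if p mod S div 2 = q mod S div 2 then
     cnj (U$$(3, 2*(p div S) + p mod 2)) * U$$(3, 2*(q div S) + q mod 2) else 0)"
  proof (cases "p < S"; cases "q < S")
    assume "p < S" "q < S" then show ?thesis unfolding fb using Bk'[of p q 0 0] by (simp add: lo)
  next
    assume "p < S" "\<not> q < S" then show ?thesis unfolding fb using hi[of q] pq Bk'[of p "q-S" 0 1] by (simp add: lo)
  next
    assume "\<not> p < S" "q < S" then show ?thesis unfolding fb using hi[of p] pq Bk'[of "p-S" q 1 0] by (simp add: lo)
  next
    assume "\<not> p < S" "\<not> q < S" then show ?thesis unfolding fb using hi[of p] hi[of q] pq Bk'[of "p-S" "q-S" 1 1] by simp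
  qed
  then show ?thesis unfolding S .
qed

definition bv :: "nat \<Rightarrow> nat \<Rightarrow> nat" where "bv a p = (if bit a p then 1 else 0)"

lemma K_entry:
  fixes M N E y x :: nat
  assumes "y < 2^M*2^(N+2)*2^E" "x < 2^M*2^(N+2)*2^E"
  shows "kron (kron (Id M) (Lambda U (Suc N))) (Id E) $$ (y,x) =
    (if y div 2^(E+1+N+1) = x div 2^(E+1+N+1) \<and> y div 2^(E+1) mod 2^N = x div 2^(E+1) mod 2^N \<and> y mod 2^E = x mod 2^E
     then cnj (U$$(3, 2*bv y (E+1+N) + bv y E)) * U$$(3, 2*bv x (E+1+N) + bv x E) else 0)"
proof -
  have c2: "kron (Id M) (Lambda U (Suc N)) \<in> carrier_mat (2^M*2^(N+2)) (2^M*2^(N+2))"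
    by (rule kron_carrier2[OF Id_carrier Lambda_carrier])
  define y1 where "y1 = y div 2^E"
  define x1 where "x1 = x div 2^E"
  have b1: "y1 < 2^M*2^(N+2)" "x1 < 2^M*2^(N+2)" using assms unfolding y1_def x1_def by (auto intro!: divbound)
  have b2: "y1 div 2^(N+2) < 2^M" "x1 div 2^(N+2) < 2^M" using b1 by (auto intro!: divbound)
  have "kron (kron (Id M) (Lambda U (Suc N))) (Id E) $$ (y,x) =
     Id M $$ (y1 div 2^(N+2), x1 div 2^(N+2)) * Lambda U (Suc N) $$ (y1 mod 2^(N+2), x1 mod 2^(N+2))
     * Id E $$ (y mod 2^E, x mod 2^E)"
    apply (subst kron_index2[OF c2 Id_carrier assms])
    apply (subst kron_index2[OF Id_carrier Lambda_carrier b1[unfolded y1_def x1_def]])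
    apply (fold y1_def x1_def)
    by simp
  also have "\<dots> = (if y1 div 2^(N+2) = x1 div 2^(N+2) \<and> y1 mod 2^(N+2) mod 2^(N+1) div 2 = x1 mod 2^(N+2) mod 2^(N+1) div 2
      \<and> y mod 2^E = x mod 2^E then
      cnj (U$$(3, 2*(y1 mod 2^(N+2) div 2^(N+1)) + y1 mod 2^(N+2) mod 2)) * U$$(3, 2*(x1 mod 2^(N+2) div 2^(N+1)) + x1 mod 2^(N+2) mod 2)
      else 0)"
    apply (subst Lambda_entry)
      apply simp
     apply simp
    using b2 by (simp add: Id_index)
  finally show ?thesis unfolding y1_def x1_def V1 V2 V3 V4 bv_def .
qed
lemma bit_high: "(y::nat) < 2^k \<Longrightarrow> k \<le> q \<Longrightarrow> \<not> bit y q"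
proof -
  assume "y < 2^k" "k \<le> q"
  then have "y < 2^q" by (meson less_le_trans one_le_numeral power_increasing)
  then show ?thesis by (simp add: bit_iff_odd)
qed

lemma qbit_bv: "qbit k i y = bv y (k - i)"
  unfolding qbit_def bv_def bit_iff_odd by (auto simp: odd_iff_mod_2_eq_one)

lemma gate2_cond:
  fixes M N E k y x :: nat
  assumes k: "k = M+1+N+1+E" and "y < 2^k" "x < 2^k"
  shows "(\<forall>i\<in>{1..k}. i \<noteq> M+1 \<and> i \<noteq> M+1+(N+1) \<longrightarrow> qbit k i y = qbit k i x) \<longleftrightarrow>
    (\<forall>q. q \<noteq> E \<and> q \<noteq> E+1+N \<longrightarrow> (bit y q \<longleftrightarrow> bit x q))" (is "?l \<longleftrightarrow> ?r")
proof
  assume l: ?l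
  show ?r
  proof (intro allI impI)
    fix q assume q: "q \<noteq> E \<and> q \<noteq> E+1+N"
    show "bit y q = bit x q"
    proof (cases "q < k")
      case True
      then have "k - q \<in> {1..k}" "k - q \<noteq> M+1" "k - q \<noteq> M+1+(N+1)" using q k by auto
      then have "qbit k (k-q) y = qbit k (k-q) x" using l by blast
      moreover have "k - (k - q) = q" using True by simp
      ultimately show ?thesis unfolding qbit_bv bv_def by (auto split: if_splits)
    next
      case False then show ?thesis using bit_high assms(2,3) by (metis not_less)
    qed
  qed
next
  assume r: ?r
  show ?l
  proof (intro ballI impI)
    fix i assume i: "i \<in> {1..k}" "i \<noteq> M+1 \<and> i \<noteq> M+1+(N+1)"
    then have "k - i \<noteq> E \<and> k - i \<noteq> E+1+N" using k by auto
    then show "qbit k i y = qbit k i x" using r unfolding qbit_bv bv_def by auto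
  qed
qed

lemma gate2_entry:
  fixes M N E k y x :: nat
  assumes k: "k = M+1+N+1+E" and "y < 2^k" "x < 2^k"
  shows "gate2 U k (M+1) (M+1+(N+1)) $$ (y,x) = (if (\<forall>q. q \<noteq> E \<and> q \<noteq> E+1+N \<longrightarrow> (bit y q \<longleftrightarrow> bit x q))
     then U $$ (2 * bv y (E+1+N) + bv y E, 2 * bv x (E+1+N) + bv x E) else 0)"
proof -
  have kk: "k - (M+1) = E+1+N" "k - (M+1+(N+1)) = E" using k by auto
  have e: "gate2 U k (M+1) (M+1+(N+1)) $$ (y,x) = (if (\<forall>i\<in>{1..k}. i \<noteq> M+1 \<and> i \<noteq> M+1+(N+1) \<longrightarrow> qbit k i y = qbit k i x)
     then U $$ (2 * qbit k (M+1) y + qbit k (M+1+(N+1)) y, 2 * qbit k (M+1) x + qbit k (M+1+(N+1)) x) else 0)"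
    unfolding gate2_def using assms(2,3) by (simp only: index_mat(1) prod.case)
  show ?thesis unfolding e gate2_cond[OF assms] unfolding qbit_bv kk ..
qed

lemma mult_entry:
  assumes "A \<in> carrier_mat n r" "B \<in> carrier_mat r c" "i < n" "j < c"
  shows "(A * B) $$ (i,j) = (\<Sum>l<r. A $$ (i,l) * B $$ (l,j))"
  using assms by (auto simp: scalar_prod_def lessThan_atLeast0 intro!: sum.cong)

lemma pow_k: "(2::nat)^(M+1+N+1+E) = 2^M*2*2^N*2*2^E" "(2::nat)^(M+1+N+1+E) = 2^M*2^(N+2)*2^E"
  by (simp_all add: power_add)

lemma main_entry:
  fixes M N E k y x :: nat and U :: "complex mat"
  assumes k: "k = M+1+N+1+E" and yx: "y < 2^k" "x < 2^k"
  defines "G \<equiv> gate2 U k (M+1) (M+1+(N+1))"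
  defines "P \<equiv> kron (kron (kron (kron (Id M) P1) (Id N)) P1) (Id E)"
  shows "(dag G * P * G) $$ (y,x) = (if (\<forall>q. q \<noteq> E \<and> q \<noteq> E+1+N \<longrightarrow> (bit y q \<longleftrightarrow> bit x q))
     then cnj (U$$(3, 2*bv y (E+1+N) + bv y E)) * U$$(3, 2*bv x (E+1+N) + bv x E) else 0)"
proof -
  define t where "t = E+1+N"
  define AO where "AO = (\<lambda>(a::nat) (b::nat). \<forall>q. q \<noteq> E \<and> q \<noteq> t \<longrightarrow> (bit a q \<longleftrightarrow> bit b q))"
  define c where "c = (\<lambda>z::nat. bit z E \<and> bit z t)"
  have Gc: "G \<in> carrier_mat (2^k) (2^k)" unfolding G_def gate2_def by simp
  have dGc: "dag G \<in> carrier_mat (2^k) (2^k)" using Gc unfolding dag_def by auto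
  have Pc: "P \<in> carrier_mat (2^k) (2^k)" unfolding P_def k pow_k(1)
    by (intro kron_carrier2 Id_carrier P1_carrier)
  have Pe: "P $$ (i,j) = (if i = j \<and> c i then 1 else 0)" if "i < 2^k" "j < 2^k" for i j
    unfolding P_def c_def t_def using Pk_entry that unfolding k pow_k(1) by simp
  have Ge: "G $$ (z,w) = (if AO z w then U $$ (2 * bv z t + bv z E, 2 * bv w t + bv w E) else 0)"
    if "z < 2^k" "w < 2^k" for z w
    unfolding G_def AO_def t_def using gate2_entry[OF k that] by simp
  have dGe: "dag G $$ (w,z) = cnj (G $$ (z,w))" if "z < 2^k" "w < 2^k" for z w
    unfolding dag_def using that Gc by auto
  have A: "(dag G * P) $$ (y,z) = cnj (G $$ (z,y)) * (if c z then 1 else 0)" if "z < 2^k" for z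
  proof -
    have "(dag G * P) $$ (y,z) = (\<Sum>w<2^k. dag G $$ (y,w) * P $$ (w,z))"
      by (rule mult_entry[OF dGc Pc yx(1) that])
    also have "\<dots> = (\<Sum>w<2^k. if w = z then cnj (G $$ (z,y)) * (if c z then 1 else 0) else 0)"
      by (rule sum.cong) (use that yx in \<open>auto simp: Pe dGe\<close>)
    also have "\<dots> = cnj (G $$ (z,y)) * (if c z then 1 else 0)" using that by simp
    finally show ?thesis .
  qed
  have dGPc: "dag G * P \<in> carrier_mat (2^k) (2^k)" using dGc Pc by simp
  define f where "f = (\<lambda>z. cnj (G $$ (z,y)) * (if c z then 1 else 0) * G $$ (z,x))"
  have B: "(dag G * P * G) $$ (y,x) = (\<Sum>z<2^k. f z)"
    unfolding f_def by (subst mult_entry[OF dGPc Gc yx]) (auto simp: A intro!: sum.cong)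
  define z0 where "z0 = set_bit E (set_bit t y)"
  have tk: "t < k" "E < k" unfolding t_def k by auto
  have bz0: "bit z0 q \<longleftrightarrow> bit y q \<or> q = E \<or> q = t" for q
    unfolding z0_def by (auto simp: bit_simps)
  have z0k: "z0 < 2^k"
  proof -
    have hy: "\<And>q. bit y q \<Longrightarrow> q < k" using bit_high[OF yx(1)] not_le by blast
    have "take_bit k z0 = z0"
      by (rule bit_eqI) (use tk hy in \<open>auto simp: bit_simps bz0\<close>)
    then show ?thesis by (metis take_bit_nat_less_exp)
  qed
  have zero: "f z = 0" if "z < 2^k" "z \<noteq> z0" for z
  proof (rule ccontr)
    assume "f z \<noteq> 0"
    then have "c z" "AO z y" unfolding f_def using Ge[OF that(1) yx(1)] by (auto split: if_splits)
    then have "z = z0" unfolding c_def AO_def by (intro bit_eqI) (auto simp: bz0)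
    then show False using that by simp
  qed
  have "(\<Sum>z<2^k. f z) = f z0"
  proof -
    have "(\<Sum>z<2^k. f z) = f z0 + (\<Sum>z\<in>{..<2^k} - {z0}. f z)"
      using z0k by (simp add: sum.remove)
    also have "(\<Sum>z\<in>{..<2^k} - {z0}. f z) = 0" using zero by (intro sum.neutral) auto
    finally show ?thesis by simp
  qed
  moreover have "f z0 = (if AO y x then cnj (U$$(3, 2*bv y t + bv y E)) * U$$(3, 2*bv x t + bv x E) else 0)"
  proof -
    have cz: "c z0" unfolding c_def by (simp add: bz0)
    have a1: "AO z0 y" unfolding AO_def by (auto simp: bz0)
    have a2: "AO z0 x \<longleftrightarrow> AO y x" unfolding AO_def by (auto simp: bz0)
    have bvz: "bv z0 t = 1" "bv z0 E = 1" unfolding bv_def by (simp_all add: bz0)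
    show ?thesis unfolding f_def using Ge[OF z0k yx(1)] Ge[OF z0k yx(2)] cz a1 a2 bvz by simp
  qed
  ultimately show ?thesis using B unfolding AO_def t_def by simp
qed

lemma final_gen:
  fixes M N E k :: nat and U \<rho> :: "complex mat"
  assumes k: "k = M+1+N+1+E" and rho: "\<rho> \<in> carrier_mat (2^k) (2^k)"
  shows "tr (kron (kron (kron (kron (Id M) P1) (Id N)) P1) (Id E) * gate2 U k (M+1) (M+1+(N+1)) * \<rho> * dag (gate2 U k (M+1) (M+1+(N+1))))
    = tr (kron (kron (Id M) (Lambda U (Suc N))) (Id E) * \<rho>)"
proof -
  define G where "G = gate2 U k (M+1) (M+1+(N+1))"
  define P where "P = kron (kron (kron (kron (Id M) P1) (Id N)) P1) (Id E)"
  define K where "K = kron (kron (Id M) (Lambda U (Suc N))) (Id E)"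
  have Gc: "G \<in> carrier_mat (2^k) (2^k)" unfolding G_def gate2_def by simp
  have dGc: "dag G \<in> carrier_mat (2^k) (2^k)" using Gc unfolding dag_def by auto
  have Pc: "P \<in> carrier_mat (2^k) (2^k)" unfolding P_def k pow_k(1)
    by (intro kron_carrier2 Id_carrier P1_carrier)
  have Kc: "K \<in> carrier_mat (2^k) (2^k)" unfolding K_def k pow_k(2)
    by (intro kron_carrier2 Id_carrier Lambda_carrier)
  have eq: "dag G * P * G = K"
  proof (rule eq_matI)
    fix y x assume "y < dim_row K" "x < dim_col K"
    then have yx: "y < 2^k" "x < 2^k" using Kc by auto
    show "(dag G * P * G) $$ (y,x) = K $$ (y,x)"
      unfolding G_def P_def main_entry[OF k yx] K_def K_entry[OF yx[unfolded k pow_k(2)]] decomp_B ..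
  qed (use Gc dGc Pc Kc in auto)
  have "tr (P * G * \<rho> * dag G) = tr (dag G * (P * G * \<rho>))"
    by (rule tr_comm) (use Pc Gc rho dGc in auto)
  also have "\<dots> = tr (dag G * P * G * \<rho>)"
    by (simp only: assoc_mult_mat[OF dGc Pc Gc] assoc_mult_mat[OF dGc mult_carrier_mat[OF Pc Gc] rho])
  also have "\<dots> = tr (K * \<rho>)" unfolding eq ..
  finally show ?thesis unfolding G_def P_def K_def .
qed


theorem theorem8p1:
  fixes U \<rho> :: "complex mat" and k m n :: nat
  assumes "U \<in> carrier_mat 4 4"
    and "k \<ge> 2" and "m \<ge> 1" and "n \<ge> 1" and "m + n \<le> k"
    and "density k \<rho>"
  shows "tr (kron (kron (kron (kron (Id (m - 1)) P1) (Id (n - 1))) P1) (Id (k - m - n))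
             * gate2 U k m (m + n) * \<rho> * dag (gate2 U k m (m + n)))
       = tr (kron (kron (Id (m - 1)) (Lambda U n)) (Id (k - m - n)) * \<rho>)"
proof -
  define M where "M = m - 1"
  define N where "N = n - 1"
  define E where "E = k - m - n"
  have mM: "m = M+1" and nN: "n = Suc N" and kk: "k = M+1+N+1+E" and En: "k - m - n = E"
    using assms unfolding M_def N_def E_def by auto
  have rho: "\<rho> \<in> carrier_mat (2^k) (2^k)" using assms(6) unfolding density_def by simp
  have mn: "m + n = M+1+(N+1)" using mM nN by simp
  show ?thesis
    unfolding En mn unfolding mM nN diff_Suc_1 add_diff_cancel_right'
    using final_gen[OF kk rho, of U] by (simp add: mn[symmetric] mM nN)
qed

end
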